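(* Let $K\subseteq\mathbb{R}^n$ be a convex set, and let $O\in\partial K$. Then $\mathrm{LCD}(O)>0$.
   Context: A point $P\in\partial K\setminus\{O\}$ is called $O$-critical if $\langle O-P, X-P\rangle\geq 0$ for all $X\in K$ (equivalently, the affine hyperplane through $P$ orthogonal to the segment $OP$ is a supporting hyperplane of $K$). The least critical distance $\mathrm{LCD}(O)$ is the infimum of $|OP|$ over all $O$-critical points $P\in\partial K$ (with the infimum of the empty set equal to $+\infty$). *)

theory Defs
  imports "HOL-Analysis.Analysis"
begin

definition critical_point :: "(real ^ 'n) set \<Rightarrow> real ^ 'n \<Rightarrow> real ^ 'n \<Rightarrow> bool" where
  "critical_point K Ob P \<longleftrightarrow>
     P \<in> frontier K \<and> P \<noteq> Ob \<and> (\<forall>X\<in>K. inner (Ob - P) (X - P) \<ge> 0)"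

text \<open>Least critical distance, valued in the extended reals (Inf of the empty set is +infinity).\<close>
definition LCD :: "(real ^ 'n) set \<Rightarrow> real ^ 'n \<Rightarrow> ereal" where
  "LCD K Ob = Inf ((\<lambda>P. ereal (dist Ob P)) ` {P. critical_point K Ob P})"

end

theory Submission
  imports Defs
begin

lemma crit_closure:
  assumes "critical_point K Ob Q" and "X \<in> closure K"
  shows "inner (Ob - Q) (X - Q) \<ge> 0"
proof -
  have cl: "closed {X. inner (Ob - Q) (X - Q) \<ge> 0}"
    by (intro closed_Collect_le continuous_intros)
  have "K \<subseteq> {X. inner (Ob - Q) (X - Q) \<ge> 0}"
    using assms(1) unfolding critical_point_def by auto
  hence "closure K \<subseteq> {X. inner (Ob - Q) (X - Q) \<ge> 0}"
    using cl closure_minimal by blast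
  thus ?thesis using assms(2) by auto
qed

lemma key:
  fixes K :: "(real ^ 'n) set"
  assumes cv: "convex K" and Ob: "Ob \<in> closure K"
    and P: "critical_point K Ob P" and Q: "critical_point K Ob Q"
    and le: "2 * dist Ob Q \<le> dist Ob P"
  shows "inner (Q - Ob) (P - Ob) \<le> dist Ob Q * dist Ob P / 2"
proof -
  define dP where "dP = dist Ob P"
  define dQ where "dQ = dist Ob Q"
  have dQp: "dQ > 0" using Q unfolding critical_point_def dQ_def by auto
  have dPp: "dP > 0" using dQp le unfolding dP_def dQ_def by auto
  define t where "t = 2 * dQ / dP"
  have t0: "0 \<le> t" and t1: "t \<le> 1" using dQp dPp le
    unfolding t_def dP_def dQ_def by (auto simp: field_simps)
  have Pc: "P \<in> closure K" using P unfolding critical_point_def frontier_def by auto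
  define Z where "Z = (1 - t) *\<^sub>R Ob + t *\<^sub>R P"
  have "Z \<in> closure K"
    using convex_closure[OF cv] Ob Pc t0 t1 unfolding Z_def convex_def by auto
  hence "inner (Ob - Q) (Z - Q) \<ge> 0" using crit_closure[OF Q] by auto
  moreover have "Z - Q = (Ob - Q) + t *\<^sub>R (P - Ob)" unfolding Z_def
    by (simp add: algebra_simps)
  ultimately have "0 \<le> inner (Ob - Q) (Ob - Q) + t * inner (Ob - Q) (P - Ob)"
    by (simp add: inner_add_right)
  moreover have "inner (Ob - Q) (Ob - Q) = dQ^2"
    unfolding dQ_def by (simp add: dist_norm power2_norm_eq_inner)
  moreover have "inner (Ob - Q) (P - Ob) = - inner (Q - Ob) (P - Ob)"
    by (metis inner_minus_left minus_diff_eq)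
  moreover have "t * inner (Ob - Q) (P - Ob) = - (t * inner (Q - Ob) (P - Ob))"
    by (metis inner_minus_left minus_diff_eq mult_minus_right)
  ultimately have "t * inner (Q - Ob) (P - Ob) \<le> dQ^2" by linarith
  hence "2 * dQ * inner (Q - Ob) (P - Ob) \<le> dQ^2 * dP"
    using dPp unfolding t_def by (simp add: field_simps)
  hence "2 * dQ * inner (Q - Ob) (P - Ob) \<le> 2 * dQ * (dQ * dP / 2)"
    by (simp add: power2_eq_square algebra_simps)
  hence "inner (Q - Ob) (P - Ob) \<le> dQ * dP / 2"
    using dQp by (simp add: mult_le_cancel_left_pos)
  thus ?thesis unfolding dQ_def dP_def .
qed

lemma key2:
  fixes K :: "(real ^ 'n) set"
  assumes cv: "convex K" and Ob: "Ob \<in> closure K"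
    and P: "critical_point K Ob P" and Q: "critical_point K Ob Q"
    and le: "2 * dist Ob Q \<le> dist Ob P"
  shows "norm ((Q - Ob) /\<^sub>R dist Ob Q - (P - Ob) /\<^sub>R dist Ob P) \<ge> 1"
proof -
  define dP where "dP = dist Ob P"
  define dQ where "dQ = dist Ob Q"
  have dQp: "dQ > 0" using Q unfolding critical_point_def dQ_def by auto
  have dPp: "dP > 0" using dQp le unfolding dP_def dQ_def by auto
  define u where "u = (Q - Ob) /\<^sub>R dQ"
  define v where "v = (P - Ob) /\<^sub>R dP"
  have nu: "inner u u = 1" unfolding u_def using dQp
    by (simp add: dQ_def dist_norm power2_norm_eq_inner[symmetric] norm_minus_commute)
  have nv: "inner v v = 1" unfolding v_def using dPp
    by (simp add: dP_def dist_norm power2_norm_eq_inner[symmetric] norm_minus_commute)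
  have "inner u v = inner (Q - Ob) (P - Ob) / (dQ * dP)"
    unfolding u_def v_def by (simp only: inner_scaleR_left inner_scaleR_right) (simp add: field_simps)
  also have "\<dots> \<le> (dQ * dP / 2) / (dQ * dP)"
    using key[OF assms] dQp dPp unfolding dQ_def dP_def
    by (intro divide_right_mono) auto
  also have "\<dots> = 1/2" using dQp dPp by simp
  finally have uv: "inner u v \<le> 1/2" .
  have "(norm (u - v))^2 = inner u u - 2 * inner u v + inner v v"
    by (simp add: power2_norm_eq_inner inner_diff_left inner_diff_right inner_commute)
  hence "(norm (u - v))^2 \<ge> 1" using nu nv uv by linarith
  hence "norm (u - v) \<ge> 1"
    by (metis abs_norm_cancel one_le_power power2_le_imp_le real_sqrt_abs real_sqrt_ge_1_iff norm_ge_zero one_power2 power2_le_imp_le)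
  thus ?thesis unfolding u_def v_def dQ_def dP_def .
qed

theorem mainTheorem2:
  fixes K :: "(real ^ 'n) set" and Ob :: "real ^ 'n"
  assumes "convex K" and "Ob \<in> frontier K"
  shows "LCD K Ob > 0"
proof (rule ccontr)
  assume "\<not> LCD K Ob > 0"
  hence L: "LCD K Ob < ereal e" if "e > 0" for e
    using that by (metis ereal_less(2) not_less order_le_less_trans)
  have ex: "\<exists>P. critical_point K Ob P \<and> dist Ob P < e" if "e > 0" for e
  proof -
    have "Inf ((\<lambda>P. ereal (dist Ob P)) ` {P. critical_point K Ob P}) < ereal e"
      using L[OF that] unfolding LCD_def .
    then show ?thesis by (auto simp: Inf_less_iff)
  qed
  have Oc: "Ob \<in> closure K" using assms(2) unfolding frontier_def by auto
  obtain P0 where P0: "critical_point K Ob P0 \<and> dist Ob P0 < 1" using ex[of 1] by auto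
  obtain f where f: "\<And>n. critical_point K Ob (f n)"
     and fs: "\<And>n. dist Ob (f (Suc n)) < dist Ob (f n) / 2"
  proof -
    have "\<exists>f. \<forall>n. critical_point K Ob (f n) \<and>
       dist Ob (f (Suc n)) < dist Ob (f n) / 2"
    proof (rule dependent_nat_choice[where P="\<lambda>_ P. critical_point K Ob P"])
      show "\<exists>x. critical_point K Ob x" using P0 by auto
    next
      fix x n assume "critical_point K Ob x"
      hence "dist Ob x > 0" unfolding critical_point_def by auto
      then show "\<exists>y. critical_point K Ob y \<and> dist Ob y < dist Ob x / 2"
        using ex[of "dist Ob x / 2"] by auto
    qed
    then show ?thesis using that by blast
  qed
  have dec: "decseq (\<lambda>n. dist Ob (f n))"
  proof (rule decseq_SucI)
    fix n
    have "dist Ob (f (Suc n)) < dist Ob (f n) / 2" by (rule fs)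
    moreover have "dist Ob (f n) \<ge> 0" by simp
    ultimately show "dist Ob (f (Suc n)) \<le> dist Ob (f n)" by linarith
  qed
  have far: "norm ((f j - Ob) /\<^sub>R dist Ob (f j) - (f i - Ob) /\<^sub>R dist Ob (f i)) \<ge> 1"
    if "i < j" for i j
  proof -
    have "dist Ob (f j) \<le> dist Ob (f (Suc i))" using dec that decseqD[of _ "Suc i" j] by auto
    hence "2 * dist Ob (f j) \<le> dist Ob (f i)" using fs[of i] by linarith
    thus ?thesis using key2[OF assms(1) Oc f f] by auto
  qed
  define u where "u n = (f n - Ob) /\<^sub>R dist Ob (f n)" for n
  have us: "u n \<in> sphere 0 1" for n
  proof -
    have "dist Ob (f n) > 0" using f[of n] unfolding critical_point_def by auto
    thus ?thesis unfolding u_def by (simp add: dist_norm norm_minus_commute)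
  qed
  obtain l r where r: "strict_mono (r :: nat \<Rightarrow> nat)" and lim: "(u \<circ> r) \<longlonglongrightarrow> l"
    using compact_imp_seq_compact[OF compact_sphere[of "0::real^'n" 1]] us
    unfolding seq_compact_def by meson
  have "Cauchy (u \<circ> r)" using lim by (rule LIMSEQ_imp_Cauchy)
  then obtain M where M: "\<And>m n. m \<ge> M \<Longrightarrow> n \<ge> M \<Longrightarrow> norm ((u \<circ> r) m - (u \<circ> r) n) < 1"
    using CauchyD[of "u \<circ> r" 1] by auto
  have "norm (u (r M) - u (r (Suc M))) < 1" using M[of M "Suc M"] by auto
  moreover have "r M < r (Suc M)" using r by (simp add: strict_mono_def)
  ultimately show False using far[of "r M" "r (Suc M)"] unfolding u_def
    by (simp add: norm_minus_commute)
qed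

end
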